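(* Let $\theta\in[0,1]$, $\Delta t,\Delta x>0$, and $\mathcal A_\theta=I+\theta\Delta tD_+D_+D_-$. For every sequence $a\in\ell^2_\Delta(\mathbb Z)$, $$\|\mathcal A_\theta a\|^2_{\ell^2_\Delta}=\|a\|^2_{\ell^2_\Delta}+\theta\Delta t\Delta x\|D_+D_-(a)\|^2_{\ell^2_\Delta}+\theta^2\Delta t^2\|D_+D_+D_-(a)\|^2_{\ell^2_\Delta}.$$
   Context: For a sequence $a=(a_j)_{j\in\mathbb Z}$: $D_+(a)_j=(a_{j+1}-a_j)/\Delta x$, $D_-(a)_j=(a_j-a_{j-1})/\Delta x$; $\|a\|_{\ell^2_\Delta}=(\Delta x\sum_j a_j^2)^{1/2}$; $I$ is the identity. *)

theory Defs
  imports "HOL-Analysis.Analysis"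
begin

definition Dp :: "real \<Rightarrow> (int \<Rightarrow> real) \<Rightarrow> (int \<Rightarrow> real)" where
  "Dp dx a = (\<lambda>j. (a (j + 1) - a j) / dx)"

definition Dm :: "real \<Rightarrow> (int \<Rightarrow> real) \<Rightarrow> (int \<Rightarrow> real)" where
  "Dm dx a = (\<lambda>j. (a j - a (j - 1)) / dx)"

text \<open>Membership in the weighted space l^2_Delta(Z) (the weight dx > 0 does not affect membership).\<close>
definition in_l2 :: "(int \<Rightarrow> real) \<Rightarrow> bool" where
  "in_l2 a \<longleftrightarrow> (\<lambda>j. (a j)^2) summable_on UNIV"

definition l2norm :: "real \<Rightarrow> (int \<Rightarrow> real) \<Rightarrow> real" where
  "l2norm dx a = sqrt (dx * (\<Sum>\<^sub>\<infinity> j\<in>UNIV. (a j)^2))"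

definition Atheta :: "real \<Rightarrow> real \<Rightarrow> real \<Rightarrow> (int \<Rightarrow> real) \<Rightarrow> (int \<Rightarrow> real)" where
  "Atheta \<theta> dt dx a = (\<lambda>j. a j + \<theta> * dt * Dp dx (Dp dx (Dm dx a)) j)"

end

theory Submission
  imports Defs
begin

lemma shift_sq_summable:
  assumes "in_l2 a"
  shows "(\<lambda>j. (a (j + m))^2) summable_on UNIV"
proof -
  have "(\<lambda>j. (a (j + m))^2) summable_on UNIV \<longleftrightarrow> (\<lambda>j. (a j)^2) summable_on UNIV"
    by (rule summable_on_reindex_bij_witness[where i="\<lambda>b. b - m" and j="\<lambda>x. x + m"]) auto
  thus ?thesis using assms unfolding in_l2_def by simp
qed

lemma prod_summable:
  assumes "in_l2 a"
  shows "(\<lambda>j. a (j + m) * a (j + n)) summable_on UNIV"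
proof -
  have 1: "(\<lambda>j. norm (a (j + m) * a (j + m))) summable_on UNIV"
    using shift_sq_summable[OF assms, of m] summable_on_iff_abs_summable_on_real
    by (simp add: power2_eq_square)
  have 2: "(\<lambda>j. norm (a (j + n) * a (j + n))) summable_on UNIV"
    using shift_sq_summable[OF assms, of n] summable_on_iff_abs_summable_on_real
    by (simp add: power2_eq_square)
  show ?thesis using abs_summable_product[OF 1 2] summable_on_iff_abs_summable_on_real by blast
qed

definition SS :: "(int \<Rightarrow> real) \<Rightarrow> int \<Rightarrow> real" where
  "SS a r = (\<Sum>\<^sub>\<infinity> j\<in>UNIV. a j * a (j + r))"

lemma prod_infsum:
  "(\<Sum>\<^sub>\<infinity> j\<in>UNIV. a (j + m) * a (j + n)) = SS a (n - m)"
  unfolding SS_def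
  by (rule infsum_reindex_bij_witness[where i="\<lambda>b. b - m" and j="\<lambda>x. x + m"])
     (auto simp: algebra_simps)

lemma SS_sym: "SS a (- r) = SS a r"
proof -
  have "SS a (- r) = (\<Sum>\<^sub>\<infinity> j\<in>UNIV. a (j + r) * a (j + 0))"
    using prod_infsum[of a r 0] by simp
  also have "\<dots> = SS a r" unfolding SS_def by (simp add: mult.commute)
  finally show ?thesis .
qed

lemma infsum_finsum:
  fixes f :: "int \<Rightarrow> int \<Rightarrow> real"
  assumes "finite M" "\<And>m. m \<in> M \<Longrightarrow> f m summable_on UNIV"
  shows "(\<Sum>\<^sub>\<infinity> j\<in>UNIV. \<Sum>m\<in>M. f m j) = (\<Sum>m\<in>M. \<Sum>\<^sub>\<infinity> j\<in>UNIV. f m j)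
     \<and> (\<lambda>j. \<Sum>m\<in>M. f m j) summable_on UNIV"
  using assms
proof (induction M rule: finite_induct)
  case empty
  then show ?case by simp
next
  case (insert x F)
  have s1: "f x summable_on UNIV" using insert by auto
  have ih: "(\<Sum>\<^sub>\<infinity> j\<in>UNIV. \<Sum>m\<in>F. f m j) = (\<Sum>m\<in>F. \<Sum>\<^sub>\<infinity> j\<in>UNIV. f m j)"
       "(\<lambda>j. \<Sum>m\<in>F. f m j) summable_on UNIV" using insert by auto
  have "(\<Sum>\<^sub>\<infinity> j\<in>UNIV. \<Sum>m\<in>insert x F. f m j) = (\<Sum>\<^sub>\<infinity> j\<in>UNIV. f x j + (\<Sum>m\<in>F. f m j))"
    using insert by simp
  also have "\<dots> = (\<Sum>\<^sub>\<infinity> j\<in>UNIV. f x j) + (\<Sum>\<^sub>\<infinity> j\<in>UNIV. \<Sum>m\<in>F. f m j)"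
    by (rule infsum_add[OF _ ih(2)]) (use s1 in simp)
  finally show ?case using insert ih s1 summable_on_add[OF s1 ih(2)] by simp
qed

lemma quad_infsum:
  assumes "in_l2 a" "finite M"
  shows "(\<Sum>\<^sub>\<infinity> j\<in>UNIV. (\<Sum>m\<in>M. \<alpha> m * a (j + m))^2)
       = (\<Sum>m\<in>M. \<Sum>n\<in>M. \<alpha> m * \<alpha> n * SS a (n - m))"
proof -
  have eq: "(\<Sum>m\<in>M. \<alpha> m * a (j + m))^2 = (\<Sum>m\<in>M. \<Sum>n\<in>M. \<alpha> m * \<alpha> n * (a (j + m) * a (j + n)))" for j
    by (simp add: power2_eq_square sum_product algebra_simps)
  have sm: "(\<lambda>j. \<Sum>n\<in>M. \<alpha> m * \<alpha> n * (a (j + m) * a (j + n))) summable_on UNIV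
     \<and> (\<Sum>\<^sub>\<infinity> j\<in>UNIV. \<Sum>n\<in>M. \<alpha> m * \<alpha> n * (a (j + m) * a (j + n)))
        = (\<Sum>n\<in>M. \<alpha> m * \<alpha> n * SS a (n - m))" for m
  proof -
    have "(\<Sum>\<^sub>\<infinity> j\<in>UNIV. \<Sum>n\<in>M. \<alpha> m * \<alpha> n * (a (j + m) * a (j + n)))
        = (\<Sum>n\<in>M. \<Sum>\<^sub>\<infinity> j\<in>UNIV. \<alpha> m * \<alpha> n * (a (j + m) * a (j + n)))
      \<and> (\<lambda>j. \<Sum>n\<in>M. \<alpha> m * \<alpha> n * (a (j + m) * a (j + n))) summable_on UNIV"
      by (rule infsum_finsum[OF assms(2)]) (intro summable_on_cmult_right prod_summable assms(1))
    moreover have "(\<Sum>\<^sub>\<infinity> j\<in>UNIV. \<alpha> m * \<alpha> n * (a (j + m) * a (j + n))) = \<alpha> m * \<alpha> n * SS a (n - m)" for n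
      by (subst infsum_cmult_right) (auto simp: prod_summable[OF assms(1)] prod_infsum)
    ultimately show ?thesis by simp
  qed
  have "(\<Sum>\<^sub>\<infinity> j\<in>UNIV. (\<Sum>m\<in>M. \<alpha> m * a (j + m))^2)
      = (\<Sum>\<^sub>\<infinity> j\<in>UNIV. \<Sum>m\<in>M. \<Sum>n\<in>M. \<alpha> m * \<alpha> n * (a (j + m) * a (j + n)))"
    by (simp add: eq)
  also have "\<dots> = (\<Sum>m\<in>M. \<Sum>\<^sub>\<infinity> j\<in>UNIV. \<Sum>n\<in>M. \<alpha> m * \<alpha> n * (a (j + m) * a (j + n)))"
    using infsum_finsum[OF assms(2), of "\<lambda>m j. \<Sum>n\<in>M. \<alpha> m * \<alpha> n * (a (j + m) * a (j + n))"] sm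
    by blast
  also have "\<dots> = (\<Sum>m\<in>M. \<Sum>n\<in>M. \<alpha> m * \<alpha> n * SS a (n - m))"
    using sm by simp
  finally show ?thesis .
qed

lemma quad4:
  assumes "in_l2 a"
  shows "(\<Sum>\<^sub>\<infinity> j\<in>UNIV. (c0 * a (j - 1) + c1 * a j + c2 * a (j + 1) + c3 * a (j + 2))^2)
    = (c0^2 + c1^2 + c2^2 + c3^2) * SS a 0 + 2 * (c0 * c1 + c1 * c2 + c2 * c3) * SS a 1
      + 2 * (c0 * c2 + c1 * c3) * SS a 2 + 2 * c0 * c3 * SS a 3"
proof -
  define \<alpha> where "\<alpha> = (\<lambda>m::int. if m = -1 then c0 else if m = 0 then c1 else if m = 1 then c2 else c3)"
  have "(\<Sum>m\<in>{-1,0,1,2}. \<alpha> m * a (j + m)) = c0 * a (j - 1) + c1 * a j + c2 * a (j + 1) + c3 * a (j + 2)" for j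
    by (simp add: \<alpha>_def)
  hence "(\<Sum>\<^sub>\<infinity> j\<in>UNIV. (c0 * a (j - 1) + c1 * a j + c2 * a (j + 1) + c3 * a (j + 2))^2)
     = (\<Sum>\<^sub>\<infinity> j\<in>UNIV. (\<Sum>m\<in>{-1,0,1,2}. \<alpha> m * a (j + m))^2)" by simp
  also have "\<dots> = (\<Sum>m\<in>{-1,0,1,2}. \<Sum>n\<in>{-1,0,1,2}. \<alpha> m * \<alpha> n * SS a (n - m))"
    by (rule quad_infsum[OF assms]) simp
  also have "\<dots> = (c0^2 + c1^2 + c2^2 + c3^2) * SS a 0 + 2 * (c0 * c1 + c1 * c2 + c2 * c3) * SS a 1
      + 2 * (c0 * c2 + c1 * c3) * SS a 2 + 2 * c0 * c3 * SS a 3"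
    using SS_sym[of a 1] SS_sym[of a 2] SS_sym[of a 3]
    by (simp add: \<alpha>_def power2_eq_square algebra_simps)
  finally show ?thesis .
qed

lemma norm_sq:
  assumes "dx > 0"
  shows "(l2norm dx b)^2 = dx * (\<Sum>\<^sub>\<infinity> j\<in>UNIV. (b j)^2)"
  unfolding l2norm_def using assms
  by (subst real_sqrt_pow2) (auto intro!: mult_nonneg_nonneg infsum_nonneg)

theorem proposition4:
  fixes \<theta> dt dx :: real and a :: "int \<Rightarrow> real"
  assumes "0 \<le> \<theta>" "\<theta> \<le> 1" "dt > 0" "dx > 0"
    and "in_l2 a"
  shows "(l2norm dx (Atheta \<theta> dt dx a))^2
       = (l2norm dx a)^2 + \<theta> * dt * dx * (l2norm dx (Dp dx (Dm dx a)))^2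
         + \<theta>^2 * dt^2 * (l2norm dx (Dp dx (Dp dx (Dm dx a))))^2"
proof -
  define k where "k = \<theta> * dt"
  have dx0: "dx \<noteq> 0" using assms by simp
  have eA: "Atheta \<theta> dt dx a j = (- k / dx^3) * a (j - 1) + (1 + 3 * k / dx^3) * a j
     + (- 3 * k / dx^3) * a (j + 1) + (k / dx^3) * a (j + 2)" for j
    unfolding Atheta_def Dp_def Dm_def k_def using dx0
    by (simp add: field_simps power3_eq_cube add.assoc)
  have eB: "Dp dx (Dm dx a) j = (1 / dx^2) * a (j - 1) + (- 2 / dx^2) * a j
     + (1 / dx^2) * a (j + 1) + 0 * a (j + 2)" for j
    unfolding Dp_def Dm_def using dx0
    by (simp add: field_simps power2_eq_square)
  have eC: "Dp dx (Dp dx (Dm dx a)) j = (- 1 / dx^3) * a (j - 1) + (3 / dx^3) * a j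
     + (- 3 / dx^3) * a (j + 1) + (1 / dx^3) * a (j + 2)" for j
    unfolding Dp_def Dm_def using dx0
    by (simp add: field_simps power3_eq_cube add.assoc)
  have eI: "a j = 0 * a (j - 1) + 1 * a j + 0 * a (j + 1) + 0 * a (j + 2)" for j by simp
  note q = quad4[OF assms(5)]
  have nA: "(\<Sum>\<^sub>\<infinity> j\<in>UNIV. (Atheta \<theta> dt dx a j)^2) = ((- k / dx^3)^2 + (1 + 3 * k / dx^3)^2 + (- 3 * k / dx^3)^2 + (k / dx^3)^2) * SS a 0
      + 2 * ((- k / dx^3) * (1 + 3 * k / dx^3) + (1 + 3 * k / dx^3) * (- 3 * k / dx^3) + (- 3 * k / dx^3) * (k / dx^3)) * SS a 1
      + 2 * ((- k / dx^3) * (- 3 * k / dx^3) + (1 + 3 * k / dx^3) * (k / dx^3)) * SS a 2 + 2 * (- k / dx^3) * (k / dx^3) * SS a 3"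
    by (simp only: eA q)
  have nB: "(\<Sum>\<^sub>\<infinity> j\<in>UNIV. (Dp dx (Dm dx a) j)^2) = ((1 / dx^2)^2 + (- 2 / dx^2)^2 + (1 / dx^2)^2 + 0^2) * SS a 0
      + 2 * ((1 / dx^2) * (- 2 / dx^2) + (- 2 / dx^2) * (1 / dx^2) + (1 / dx^2) * 0) * SS a 1
      + 2 * ((1 / dx^2) * (1 / dx^2) + (- 2 / dx^2) * 0) * SS a 2 + 2 * (1 / dx^2) * 0 * SS a 3"
    by (simp only: eB q)
  have nC: "(\<Sum>\<^sub>\<infinity> j\<in>UNIV. (Dp dx (Dp dx (Dm dx a)) j)^2) = ((- 1 / dx^3)^2 + (3 / dx^3)^2 + (- 3 / dx^3)^2 + (1 / dx^3)^2) * SS a 0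
      + 2 * ((- 1 / dx^3) * (3 / dx^3) + (3 / dx^3) * (- 3 / dx^3) + (- 3 / dx^3) * (1 / dx^3)) * SS a 1
      + 2 * ((- 1 / dx^3) * (- 3 / dx^3) + (3 / dx^3) * (1 / dx^3)) * SS a 2 + 2 * (- 1 / dx^3) * (1 / dx^3) * SS a 3"
    by (simp only: eC q)
  have nI: "(\<Sum>\<^sub>\<infinity> j\<in>UNIV. (a j)^2) = SS a 0"
    unfolding SS_def by (simp add: power2_eq_square)
  show ?thesis
    unfolding norm_sq[OF assms(4)] nA nB nC nI
    using dx0 unfolding k_def
    by (simp add: field_simps power2_eq_square power3_eq_cube)
qed

end
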